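(* Let $\mathcal{C}\subset S^{n-1}\subset\mathbb{R}^n$ be a spherical code whose angle set $\mathcal{A}_{\mathcal{C}}$ consists of rational numbers and such that $\mathcal{C}$ spans $\mathbb{R}^n$. Then there exist an integer $q\geq n$, a natural number $m$, a real number $\lambda>0$ and a linear isometric embedding $\iota:\mathbb{R}^n\to\mathbb{R}^q$ such that $\lambda\,\iota(\mathcal{C})\subseteq s_m$, where $s_m$ is the shell of squared norm $m$ of the integer lattice $\mathbb{Z}^q$.
   Context: A spherical code is a finite set of points on the unit sphere $S^{n-1}\subset\mathbb{R}^n$. Its angle set is $\mathcal{A}_{\mathcal{C}}=\{\langle x,y\rangle: x,y\in\mathcal{C},\,x\neq y\}$ (standard inner product). $\mathbb{Z}^q$ is the lattice of integer vectors in $\mathbb{R}^q$, and its shell $s_m$ is $\{v\in\mathbb{Z}^q:\|v\|^2=m\}$. *)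

theory Defs
  imports "HOL-Analysis.Analysis"
begin

text \<open>Vectors of R^q are represented as functions nat => real supported on {..<q}.\<close>

definition lin_isometric_embedding :: "nat \<Rightarrow> (real^'n \<Rightarrow> (nat \<Rightarrow> real)) \<Rightarrow> bool" where
  "lin_isometric_embedding q \<iota> \<longleftrightarrow>
     (\<forall>i<q. linear (\<lambda>x. \<iota> x i)) \<and>
     (\<forall>x. \<forall>i\<ge>q. \<iota> x i = 0) \<and>
     (\<forall>x y. (\<Sum>i<q. (\<iota> x i - \<iota> y i)^2) = (dist x y)^2)"

definition lattice_shell :: "nat \<Rightarrow> nat \<Rightarrow> (nat \<Rightarrow> real) set" where
  "lattice_shell q m = {v. \<exists>z::nat \<Rightarrow> int. (\<forall>i<q. v i = of_int (z i)) \<and> (\<forall>i\<ge>q. v i = 0)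
                            \<and> (\<Sum>i<q. (z i)^2) = int m}"

end

theory Submission
  imports Defs
begin

definition QS :: "('a::euclidean_space) set \<Rightarrow> 'a set" where
  "QS C = {x. \<exists>a. (\<forall>c\<in>C. a c \<in> \<rat>) \<and> x = (\<Sum>c\<in>C. a c *\<^sub>R c)}"

lemma QS_add: "x \<in> QS C \<Longrightarrow> y \<in> QS C \<Longrightarrow> x + y \<in> QS C"
proof -
  assume "x \<in> QS C" "y \<in> QS C"
  then obtain a b where "\<forall>c\<in>C. a c \<in> \<rat>" "x = (\<Sum>c\<in>C. a c *\<^sub>R c)"
     "\<forall>c\<in>C. b c \<in> \<rat>" "y = (\<Sum>c\<in>C. b c *\<^sub>R c)" by (auto simp: QS_def)
  then show ?thesis unfolding QS_def
    by (intro CollectI exI[of _ "\<lambda>c. a c + b c"]) (auto simp: scaleR_add_left sum.distrib)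
qed

lemma QS_scale: "x \<in> QS C \<Longrightarrow> t \<in> \<rat> \<Longrightarrow> t *\<^sub>R x \<in> QS C"
proof -
  assume "x \<in> QS C" "t \<in> \<rat>"
  then obtain a where "\<forall>c\<in>C. a c \<in> \<rat>" "x = (\<Sum>c\<in>C. a c *\<^sub>R c)" by (auto simp: QS_def)
  then show ?thesis unfolding QS_def using \<open>t \<in> \<rat>\<close>
    by (intro CollectI exI[of _ "\<lambda>c. t * a c"]) (auto simp: scaleR_sum_right)
qed

lemma QS_zero: "0 \<in> QS C"
  unfolding QS_def by (intro CollectI exI[of _ "\<lambda>c. 0"]) auto

lemma QS_diff: "x \<in> QS C \<Longrightarrow> y \<in> QS C \<Longrightarrow> x - y \<in> QS C"
  using QS_add[of x C "(-1) *\<^sub>R y"] QS_scale[of y C "-1"] by simp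

lemma QS_sum: "finite S \<Longrightarrow> (\<And>s. s \<in> S \<Longrightarrow> f s \<in> QS C) \<Longrightarrow> sum f S \<in> QS C"
  by (induction S rule: finite_induct) (auto intro: QS_add QS_zero)

lemma QS_base: "finite C \<Longrightarrow> c \<in> C \<Longrightarrow> c \<in> QS C"
  unfolding QS_def
proof (intro CollectI exI[of _ "\<lambda>d. if d = c then 1 else 0"] conjI)
  assume "finite C" "c \<in> C"
  have "(\<Sum>d\<in>C. (if d = c then 1 else 0) *\<^sub>R d) = (\<Sum>d\<in>C. if d = c then d else 0)"
    by (rule sum.cong) auto
  then show "c = (\<Sum>d\<in>C. (if d = c then 1 else 0) *\<^sub>R d)" using \<open>finite C\<close> \<open>c \<in> C\<close> by simp
qed auto

lemma QS_inner:
  assumes "\<forall>c\<in>C. \<forall>d\<in>C. c \<bullet> d \<in> \<rat>" "x \<in> QS C" "y \<in> QS C"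
  shows "x \<bullet> y \<in> \<rat>"
proof -
  obtain a b where "\<forall>c\<in>C. a c \<in> \<rat>" "x = (\<Sum>c\<in>C. a c *\<^sub>R c)"
     "\<forall>c\<in>C. b c \<in> \<rat>" "y = (\<Sum>c\<in>C. b c *\<^sub>R c)" using assms by (auto simp: QS_def)
  then show ?thesis using assms(1)
    by (auto simp: inner_sum_left inner_sum_right intro!: Rats_sum Rats_mult)
qed

lemma span_insert_scale:
  fixes y :: "'a::real_vector"
  assumes "c \<noteq> 0"
  shows "span (insert (c *\<^sub>R y) U) = span (insert y U)"
proof -
  have "span (insert (c *\<^sub>R y) U) \<subseteq> span (insert y U)"
    by (intro span_minimal) (auto intro: span_base span_mul subspace_span)
  moreover have "span (insert y U) \<subseteq> span (insert (c *\<^sub>R y) U)"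
  proof (intro span_minimal)
    have "(1/c) *\<^sub>R (c *\<^sub>R y) \<in> span (insert (c *\<^sub>R y) U)"
      by (intro span_mul span_base) auto
    then show "insert y U \<subseteq> span (insert (c *\<^sub>R y) U)" using assms
      by (auto intro: span_base)
  qed (rule subspace_span)
  ultimately show ?thesis by blast
qed

lemma GS:
  fixes C :: "('a::euclidean_space) set"
  assumes "finite T" "T \<subseteq> QS C" and rat: "\<forall>c\<in>C. \<forall>d\<in>C. c \<bullet> d \<in> \<rat>"
  shows "\<exists>U. finite U \<and> U \<subseteq> QS C \<and> pairwise orthogonal U \<and> span U = span T \<and>
            (\<forall>u\<in>U. \<exists>N::nat. N > 0 \<and> (u \<bullet> u) * N = 1)"
  using assms(1,2)
proof (induction T rule: finite_induct)
  case empty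
  then show ?case by (intro exI[of _ "{}"]) auto
next
  case (insert x T)
  then obtain U where U: "finite U" "U \<subseteq> QS C" "pairwise orthogonal U" "span U = span T"
      "\<forall>u\<in>U. \<exists>N::nat. N > 0 \<and> (u \<bullet> u) * N = 1" by auto
  have xQ: "x \<in> QS C" using insert by auto
  show ?case
  proof (cases "x \<in> span U")
    case True
    then have "span (insert x T) = span T" using U(4) by (simp add: span_redundant)
    then show ?thesis using U by metis
  next
    case False
    define x' where "x' = x - (\<Sum>b\<in>U. (b \<bullet> x / (b \<bullet> b)) *\<^sub>R b)"
    have sumspan: "(\<Sum>b\<in>U. (b \<bullet> x / (b \<bullet> b)) *\<^sub>R b) \<in> span U"
      by (intro span_sum span_mul span_base)
    have x'0: "x' \<noteq> 0"
    proof
      assume "x' = 0"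
      then have "x = (\<Sum>b\<in>U. (b \<bullet> x / (b \<bullet> b)) *\<^sub>R b)" unfolding x'_def by simp
      then show False using False sumspan by simp
    qed
    have x'Q: "x' \<in> QS C" unfolding x'_def
    proof (intro QS_diff xQ QS_sum U(1) QS_scale)
      fix b assume "b \<in> U"
      then have bQ: "b \<in> QS C" using U(2) by auto
      show "b \<in> QS C" by (rule bQ)
      show "b \<bullet> x / (b \<bullet> b) \<in> \<rat>"
        using QS_inner[OF rat bQ xQ] QS_inner[OF rat bQ bQ] by (intro Rats_divide)
    qed
    have orth: "orthogonal u x'" if "u \<in> U" for u
      unfolding x'_def by (rule Gram_Schmidt_step[OF U(3)]) (use that in \<open>auto intro: span_base\<close>)
    have "x' \<bullet> x' \<in> \<rat>" by (rule QS_inner[OF rat x'Q x'Q])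
    then obtain a b where ab: "b > 0" "x' \<bullet> x' = of_int a / of_int b" by (metis Rats_cases')
    have pos: "x' \<bullet> x' > 0" using x'0 by simp
    have apos: "a > 0" using ab pos
      by (smt (verit, ccfv_SIG) divide_nonpos_pos of_int_0_less_iff of_int_le_0_iff)
    define y where "y = (1 / of_int a) *\<^sub>R x'"
    have yQ: "y \<in> QS C" unfolding y_def by (intro QS_scale x'Q) auto
    have orthy: "orthogonal u y" if "u \<in> U" for u
      using orth[OF that] unfolding y_def by (simp add: orthogonal_clauses)
    have yy: "(y \<bullet> y) * real (nat (a * b)) = 1"
      using ab apos unfolding y_def by (simp add: power2_eq_square field_simps)
    have spy: "span (insert y U) = span (insert x T)"
    proof -
      have "span (insert y U) = span (insert x' U)" unfolding y_def
        using apos by (intro span_insert_scale) simp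
      also have "\<dots> = span (insert x U)" unfolding x'_def
        by (rule eq_span_insert_eq) (use sumspan in \<open>simp add: span_neg\<close>)
      also have "\<dots> = span (insert x T)" using U(4) by (simp add: span_insert)
      finally show ?thesis .
    qed
    show ?thesis
    proof (intro exI[of _ "insert y U"] conjI)
      show "pairwise orthogonal (insert y U)"
        using U(3) orthy by (intro pairwise_orthogonal_insert) (auto simp: orthogonal_commute)
      show "\<forall>u\<in>insert y U. \<exists>N::nat. N > 0 \<and> (u \<bullet> u) * N = 1"
        using U(5) yy apos ab(1) by (auto intro!: exI[of _ "nat (a*b)"])
    qed (use U yQ spy in auto)
  qed
qed

lemma parseval:
  fixes U :: "('a::euclidean_space) set"
  assumes "finite U" "pairwise orthogonal U" "0 \<notin> U" "span U = UNIV"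
  shows "z \<bullet> z = (\<Sum>u\<in>U. (z \<bullet> u)^2 / (u \<bullet> u))"
proof -
  have "z \<in> span U" using assms by simp
  then obtain a where z: "z = (\<Sum>v\<in>U. a v *\<^sub>R v)" using span_finite[OF assms(1)] by auto
  have coef: "z \<bullet> w = a w * (w \<bullet> w)" if "w \<in> U" for w
  proof -
    have "z \<bullet> w = (\<Sum>v\<in>U. a v * (v \<bullet> w))" unfolding z by (simp add: inner_sum_left)
    also have "\<dots> = (\<Sum>v\<in>U. if v = w then a w * (w \<bullet> w) else 0)"
      using assms(2) that by (intro sum.cong) (auto simp: pairwise_def orthogonal_def)
    also have "\<dots> = a w * (w \<bullet> w)" using assms(1) that by simp
    finally show ?thesis .
  qed
  have "z \<bullet> z = (\<Sum>v\<in>U. a v * (z \<bullet> v))"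
    by (subst (2) z) (simp add: inner_sum_right)
  also have "\<dots> = (\<Sum>u\<in>U. (z \<bullet> u)^2 / (u \<bullet> u))"
  proof (intro sum.cong refl)
    fix v assume v: "v \<in> U"
    then have "v \<bullet> v \<noteq> 0" using assms(3) by auto
    then show "a v * (z \<bullet> v) = (z \<bullet> v)^2 / (v \<bullet> v)" using coef[OF v]
      by (simp add: power2_eq_square field_simps)
  qed
  finally show ?thesis .
qed

lemma sum_concat_rep:
  "sum_list (map g (concat (map (\<lambda>u. replicate (N u) u) us))) = sum_list (map (\<lambda>u. real (N u) * g u) us)"
  for g :: "'a \<Rightarrow> real"
  by (induction us) (simp_all add: sum_list_replicate)

lemma sum_nth_list: "(\<Sum>j<length L. g (L!j)) = sum_list (map g (L::'a list)) " for g :: "'a \<Rightarrow> real"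
proof -
  have "sum_list (map g L) = (\<Sum>i = 0..<length (map g L). map g L ! i)" by (rule sum_list_sum_nth)
  also have "\<dots> = (\<Sum>j<length L. g (L!j))" by (simp add: atLeast0LessThan)
  finally show ?thesis by simp
qed

lemma embed_list:
  fixes U :: "('a::euclidean_space) set"
  assumes "finite U" "pairwise orthogonal U" "span U = UNIV"
    and N: "\<forall>u\<in>U. \<exists>N::nat. N > 0 \<and> (u \<bullet> u) * N = 1"
  shows "\<exists>L. set L \<subseteq> U \<and> (\<forall>z. (\<Sum>j<length L. (z \<bullet> L!j)^2) = z \<bullet> z)"
proof -
  obtain N' where N'0: "\<forall>u\<in>U. 0 < real (N' u) \<and> (u \<bullet> u) * real (N' u) = 1" using bchoice[OF N] by blast
  have N': "\<forall>u\<in>U. (u \<bullet> u) * real (N' u) = 1" using N'0 by blast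
  obtain us where us: "set us = U" "distinct us" using finite_distinct_list[OF assms(1)] by blast
  define L where "L = concat (map (\<lambda>u. replicate (N' u) u) us)"
  have "0 \<notin> U"
  proof
    assume "0 \<in> U"
    then have "((0::'a) \<bullet> 0) * real (N' 0) = 1" using N' by blast
    then show False by simp
  qed
  have "(\<Sum>j<length L. (z \<bullet> L!j)^2) = z \<bullet> z" for z
  proof -
    have "(\<Sum>j<length L. (z \<bullet> L!j)^2) = sum_list (map (\<lambda>v. (z \<bullet> v)^2) L)"
      by (rule sum_nth_list)
    also have "\<dots> = sum_list (map (\<lambda>u. real (N' u) * (z \<bullet> u)^2) us)"
      unfolding L_def by (rule sum_concat_rep)
    also have "\<dots> = (\<Sum>u\<in>U. real (N' u) * (z \<bullet> u)^2)"
      using us by (simp add: sum_list_distinct_conv_sum_set)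
    also have "\<dots> = (\<Sum>u\<in>U. (z \<bullet> u)^2 / (u \<bullet> u))"
    proof (intro sum.cong refl)
      fix u assume "u \<in> U"
      then have "(u \<bullet> u) * N' u = 1" using N' by auto
      moreover from this have "u \<bullet> u \<noteq> 0" by (metis mult_zero_left zero_neq_one)
      ultimately have "real (N' u) = 1 / (u \<bullet> u)" by (simp add: field_simps)
      then show "real (N' u) * (z \<bullet> u)^2 = (z \<bullet> u)^2 / (u \<bullet> u)" by simp
    qed
    also have "\<dots> = z \<bullet> z" by (rule parseval[OF assms(1,2) \<open>0 \<notin> U\<close> assms(3), symmetric])
    finally show ?thesis .
  qed
  moreover have "set L \<subseteq> U" unfolding L_def using us by auto
  ultimately show ?thesis by blast
qed


lemma common_denom:
  assumes "finite S" "S \<subseteq> \<rat>"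
  shows "\<exists>D::int. D > 0 \<and> (\<forall>s\<in>S. of_int D * s \<in> (\<int>::real set))"
  using assms
proof (induction S rule: finite_induct)
  case empty then show ?case by (intro exI[of _ 1]) auto
next
  case (insert s S)
  then obtain D where D: "D > 0" "\<forall>t\<in>S. of_int D * t \<in> (\<int>::real set)" by auto
  have "s \<in> \<rat>" using insert by auto
  then obtain a b where ab: "b > 0" "s = of_int a / of_int b" by (metis Rats_cases')
  show ?case
  proof (intro exI[of _ "D * b"] conjI ballI)
    show "D * b > 0" using D ab by simp
    fix t assume "t \<in> insert s S"
    then show "of_int (D * b) * t \<in> \<int>"
    proof
      assume "t = s"
      then have "of_int (D * b) * t = of_int (D * a)" using ab by (simp add: field_simps)
      then show ?thesis by (metis Ints_of_int)
    next
      assume "t \<in> S"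
      have eq: "of_int (D * b) * t = of_int b * (of_int D * t)" by simp
      have "of_int D * t \<in> (\<int>::real set)" using D(2) \<open>t \<in> S\<close> by blast
      then have "of_int b * (of_int D * t) \<in> (\<int>::real set)"
        by (rule Ints_mult[OF Ints_of_int])
      then show ?thesis by (subst eq)
    qed
  qed
qed

lemma Ints_floor_eq: "x \<in> \<int> \<Longrightarrow> of_int \<lfloor>x\<rfloor> = (x::real)"
  by (metis Ints_cases floor_of_int)


theorem proposition2:
  fixes C :: "(real^'n) set"
  assumes "finite C"
    and "C \<subseteq> sphere 0 1"
    and "\<forall>x\<in>C. \<forall>y\<in>C. x \<noteq> y \<longrightarrow> x \<bullet> y \<in> \<rat>"
    and "span C = UNIV"
  shows "\<exists>(q::nat) (m::nat) (r::real) \<iota>. q \<ge> CARD('n) \<and> r > 0 \<and>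
           lin_isometric_embedding q \<iota> \<and>
           (\<lambda>c i. r * \<iota> c i) ` C \<subseteq> lattice_shell q m"
proof -
  have norm1: "c \<bullet> c = 1" if "c \<in> C" for c
    using assms(2) that by (auto simp: dot_square_norm)
  have rat: "\<forall>c\<in>C. \<forall>d\<in>C. c \<bullet> d \<in> \<rat>"
    using assms(3) norm1 by (metis Rats_1)
  obtain U where U: "finite U" "U \<subseteq> QS C" "pairwise orthogonal U" "span U = span C"
      "\<forall>u\<in>U. \<exists>N::nat. N > 0 \<and> (u \<bullet> u) * N = 1"
    using GS[OF assms(1) _ rat] QS_base[OF assms(1)] by blast
  obtain L where L: "set L \<subseteq> U" "\<forall>z. (\<Sum>j<length L. (z \<bullet> L!j)^2) = z \<bullet> z"
    using embed_list[OF U(1,3) _ U(5)] U(4) assms(4) by auto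
  define q where "q = max (length L) CARD('n)"
  define \<iota> where "\<iota> = (\<lambda>(x::real^'n) j. if j < length L then x \<bullet> L!j else 0)"
  have sumq: "(\<Sum>i<q. f i) = (\<Sum>i<length L. f i)" if "\<forall>i\<ge>length L. f i = (0::real)" for f
    using that unfolding q_def by (intro sum.mono_neutral_right) auto
  have iso: "lin_isometric_embedding q \<iota>"
    unfolding lin_isometric_embedding_def
  proof (intro conjI allI impI)
    fix i assume "i < q"
    show "linear (\<lambda>x. \<iota> x i)"
    proof (cases "i < length L")
      case True
      then show ?thesis unfolding \<iota>_def
        by (simp add: bounded_linear.linear[OF bounded_linear_inner_left])
    next
      case False
      then show ?thesis unfolding \<iota>_def by (simp add: linear_zero)
    qed
  next
    fix x :: "real^'n" and i :: nat assume "q \<le> i"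
    then show "\<iota> x i = 0" unfolding \<iota>_def q_def by auto
  next
    fix x y :: "real^'n"
    have "(\<Sum>i<q. (\<iota> x i - \<iota> y i)^2) = (\<Sum>i<length L. (\<iota> x i - \<iota> y i)^2)"
      by (rule sumq) (simp add: \<iota>_def)
    also have "\<dots> = (\<Sum>i<length L. ((x - y) \<bullet> L!i)^2)"
      by (intro sum.cong refl) (simp add: \<iota>_def inner_diff_left)
    also have "\<dots> = (x - y) \<bullet> (x - y)" using L(2) by blast
    also have "\<dots> = (dist x y)^2" by (simp add: dist_norm power2_norm_eq_inner)
    finally show "(\<Sum>i<q. (\<iota> x i - \<iota> y i)^2) = (dist x y)^2" .
  qed
  have ratS: "(\<lambda>(c, v). c \<bullet> v) ` (C \<times> set L) \<subseteq> \<rat>"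
  proof
    fix t assume "t \<in> (\<lambda>(c, v). c \<bullet> v) ` (C \<times> set L)"
    then obtain c v where "c \<in> C" "v \<in> set L" "t = c \<bullet> v" by auto
    then show "t \<in> \<rat>" using QS_inner[OF rat QS_base[OF assms(1)] ] L(1) U(2) by blast
  qed
  obtain D :: int where D: "D > 0" "\<forall>s\<in>(\<lambda>(c, v). c \<bullet> v) ` (C \<times> set L). of_int D * s \<in> (\<int>::real set)"
    using common_denom[OF _ ratS] assms(1) by blast
  have Dint: "of_int D * (c \<bullet> L!j) \<in> (\<int>::real set)" if "c \<in> C" "j < length L" for c j
    using D(2) that by force
  have shell: "(\<lambda>i. of_int D * \<iota> c i) \<in> lattice_shell q (nat (D^2))" if c: "c \<in> C" for c
  proof -
    define z where "z = (\<lambda>i. if i < length L then \<lfloor>of_int D * (c \<bullet> L!i)\<rfloor> else (0::int))"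
    have zi: "of_int D * \<iota> c i = of_int (z i)" for i
    proof (cases "i < length L")
      case True
      show ?thesis unfolding z_def \<iota>_def
        by (simp only: if_P[OF True]) (rule Ints_floor_eq[OF Dint[OF c True], symmetric])
    qed (simp add: z_def \<iota>_def)
    have "real_of_int (\<Sum>i<q. (z i)^2) = (\<Sum>i<q. (of_int D * \<iota> c i)^2)"
      by (simp add: zi)
    also have "\<dots> = (\<Sum>i<length L. (of_int D * \<iota> c i)^2)"
      by (rule sumq) (simp add: \<iota>_def)
    also have "\<dots> = (of_int D)^2 * (\<Sum>i<length L. (c \<bullet> L!i)^2)"
      by (simp add: \<iota>_def sum_distrib_left power_mult_distrib)
    also have "\<dots> = (of_int D)^2" using L(2) norm1[OF c] by simp
    finally have "(\<Sum>i<q. (z i)^2) = D^2" by (metis of_int_eq_iff of_int_power)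
    then have "(\<Sum>i<q. (z i)^2) = int (nat (D^2))" by simp
    moreover have "\<forall>i\<ge>q. of_int D * \<iota> c i = 0" unfolding \<iota>_def q_def by auto
    ultimately show ?thesis unfolding lattice_shell_def using zi by blast
  qed
  show ?thesis
    apply (rule exI[of _ q], rule exI[of _ "nat (D^2)"], rule exI[of _ "of_int D"], rule exI[of _ \<iota>])
    apply (intro conjI iso)
    using D(1) shell by (auto simp: q_def)
qed

end
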